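(* For every $\varepsilon>0$ there exists $C_\varepsilon\in\mathbb R$, depending only on $\varepsilon$, $\eta$ and $\Gamma$, such that $$\eta(u)\le\varepsilon\,\Gamma(u)+C_\varepsilon\qquad\text{for all }u\in\bar I_p.$$
   Context: $\eta:\mathbb R_+\to\mathbb R_+$ is continuous, $\eta(0)=0$, $\eta(u)>0$ for $u\ne0$, nondecreasing on $\mathbb R_+$, and extended to $\mathbb R$ as an even function. $p\in L^1_{loc}(\mathbb R_+)$ is absolutely continuous and increasing on $(0,\infty)$, $p(u)\to+\infty$ as $u\to+\infty$; if $p(0):=\lim_{u\downarrow0}p(u)$ is finite, $p(u)=2p(0)-p(-u)$ for $u\le0$. $I_p=(0,\infty)$ if $p(0)=-\infty$, $I_p=\mathbb R$ otherwise, with closure $\bar I_p$. $\Gamma(u)=\int_1^u(p(a)-p(1))da$ on $\bar I_p$. Assumption: $\Gamma(u)/\eta(u)\to+\infty$ as $u\to+\infty$. *)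

theory Defs
  imports "HOL-Analysis.Analysis"
begin

definition abs_cont_on :: "real set \<Rightarrow> (real \<Rightarrow> real) \<Rightarrow> bool" where
  "abs_cont_on S f \<longleftrightarrow>
     (\<forall>e>0. \<exists>d>0. \<forall>(n::nat) (a::nat\<Rightarrow>real) b.
        (\<forall>i<n. a i \<in> S \<and> b i \<in> S \<and> a i \<le> b i) \<and>
        disjoint_family_on (\<lambda>i. {a i<..<b i}) {..<n} \<and>
        (\<Sum>i<n. b i - a i) < d \<longrightarrow> (\<Sum>i<n. \<bar>f (b i) - f (a i)\<bar>) < e)"

definition p0_finite :: "(real \<Rightarrow> real) \<Rightarrow> bool" where
  "p0_finite p \<longleftrightarrow> (\<exists>L. (p \<longlongrightarrow> L) (at_right 0))"

text \<open>Closure of I_p: R if p(0) finite, [0,oo) if p(0) = -oo.\<close>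
definition Ip_bar :: "(real \<Rightarrow> real) \<Rightarrow> real set" where
  "Ip_bar p = (if p0_finite p then UNIV else {0..})"

definition Gamma :: "(real \<Rightarrow> real) \<Rightarrow> real \<Rightarrow> real" where
  "Gamma p u = (if 1 \<le> u then integral {1..u} (\<lambda>a. p a - p 1)
                else - integral {u..1} (\<lambda>a. p a - p 1))"

end

theory Submission
  imports Defs "HOL-Analysis.Equivalence_Measurable_On_Borel"
begin

theorem lemma3p3:
  fixes \<eta> p :: "real \<Rightarrow> real"
  assumes eta_cont: "continuous_on {0..} \<eta>"
    and eta0: "\<eta> 0 = 0"
    and eta_pos: "\<And>u. u > 0 \<Longrightarrow> \<eta> u > 0"
    and eta_mono: "mono_on {0..} \<eta>"
    and eta_even: "\<And>u. \<eta> (- u) = \<eta> u"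
    and p_loc_int: "\<And>b. b > 0 \<Longrightarrow> p integrable_on {0..b}"
    and p_ac: "\<And>a b. 0 < a \<Longrightarrow> abs_cont_on {a..b} p"
    and p_incr: "strict_mono_on {0<..} p"
    and p_top: "filterlim p at_top at_top"
    and p_ext: "p0_finite p \<Longrightarrow> (p \<longlongrightarrow> p 0) (at_right 0) \<and> (\<forall>u\<le>0. p u = 2 * p 0 - p (- u))"
    and growth: "filterlim (\<lambda>u. Gamma p u / \<eta> u) at_top at_top"
  shows "\<forall>\<epsilon>>0. \<exists>C::real. \<forall>u\<in>Ip_bar p. \<eta> u \<le> \<epsilon> * Gamma p u + C"
proof -
  have pos_le: "p x \<le> p y" if "0 < x" "x \<le> y" for x y
    using p_incr that by (metis greaterThan_iff less_le_trans order.order_iff_strict strict_mono_onD)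
  have p0_le: "p 0 \<le> p x" if fin: "p0_finite p" and x: "0 < x" for x
  proof -
    have t: "(p \<longlongrightarrow> p 0) (at_right 0)" using p_ext fin by blast
    have "eventually (\<lambda>y. p y \<le> p x) (at_right 0)"
      unfolding eventually_at_right_field using x
      by (intro exI[of _ x]) (auto intro: pos_le)
    then show ?thesis using tendsto_upperbound[OF t] by simp
  qed
  have pmono: "p x \<le> p y" if fin: "p0_finite p" and "x \<le> y" for x y
  proof -
    have ext: "\<forall>u\<le>0. p u = 2 * p 0 - p (- u)" using p_ext fin by blast
    have p0x: "p 0 \<le> p z" if "0 \<le> z" for z
      using p0_le[OF fin] that by (cases "z = 0") auto
    show ?thesis
    proof (cases "0 < x")
      case True show ?thesis by (rule pos_le[OF True \<open>x \<le> y\<close>])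
    next
      case False
      then have "x \<le> 0" by simp
      then have px: "p x = 2 * p 0 - p (- x)" by (rule ext[rule_format])
      show ?thesis
      proof (cases "0 \<le> y")
        case True
        have "p 0 \<le> p (-x)" using p0x False by auto
        then show ?thesis using px p0x[OF True] by linarith
      next
        case False
        have "y \<le> 0" using False by simp
        then have py: "p y = 2 * p 0 - p (- y)" by (rule ext[rule_format])
        have "p (-y) \<le> p (-x)"
        proof (cases "y = x")
          case True then show ?thesis by simp
        next
          case False2: False
          then have "0 < -y" "-y \<le> -x" using \<open>x \<le> y\<close> False by auto
          then show ?thesis using pos_le[of "-y" "-x"] by simp
        qed
        then show ?thesis using px py by linarith
      qed
    qed
  qed
  have p01: "p 0 \<le> p 1" if "p0_finite p" using p0_le[OF that] by simp
  have int_ge1: "(\<lambda>a. p a - p 1) integrable_on {1..u}" for u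
  proof -
    have "mono_on {1..u} p" by (rule mono_onI) (auto intro: pos_le)
    then show ?thesis by (intro integrable_diff integrable_const_ivl integrable_on_mono_on) auto
  qed
  have int_le1: "(\<lambda>a. p a - p 1) integrable_on {u..1}" if "u \<in> Ip_bar p" for u
  proof (cases "p0_finite p")
    case True
    have "mono_on {u..1} p" by (rule mono_onI) (auto intro: pmono[OF True])
    then show ?thesis by (intro integrable_diff integrable_const_ivl integrable_on_mono_on) auto
  next
    case False
    then have "0 \<le> u" using that by (auto simp: Ip_bar_def)
    show ?thesis
    proof (cases "u \<le> 1")
      case True
      have "p integrable_on {u..1}"
        by (rule integrable_on_subinterval[OF p_loc_int[of 1]]) (use \<open>0 \<le> u\<close> in auto)
      then show ?thesis by (intro integrable_diff) auto
    next
      case False then show ?thesis by (simp add: integrable_on_empty)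
    qed
  qed
  have Gnn: "0 \<le> Gamma p u" if u: "u \<in> Ip_bar p" for u
  proof (cases "1 \<le> u")
    case True
    then show ?thesis unfolding Gamma_def
      by (simp, intro Henstock_Kurzweil_Integration.integral_nonneg int_ge1) (auto intro: pos_le)
  next
    case False
    let ?g = "\<lambda>a. p a - p 1"
    let ?h = "\<lambda>a. if a = 0 then 0 else p a - p 1"
    have eq: "integral {u..1} ?g = integral {u..1} ?h"
      by (rule integral_spike[of "{0}"]) auto
    have hint: "?h integrable_on {u..1}"
      by (rule integrable_spike[OF int_le1[OF u], of "{0}"]) auto
    have "integral {u..1} ?h \<le> integral {u..1} (\<lambda>a. 0)"
    proof (rule Henstock_Kurzweil_Integration.integral_le[OF hint])
      fix a assume a: "a \<in> {u..1}"
      show "?h a \<le> 0"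
      proof (cases "a = 0")
        case False
        show ?thesis
        proof (cases "0 < a")
          case True then show ?thesis using pos_le[of a 1] a by auto
        next
          case f2: False
          then have "u < 0" using a False by auto
          then have "p0_finite p" using u by (auto simp: Ip_bar_def split: if_splits)
          then show ?thesis using pmono[of a 1] a by auto
        qed
      qed simp
    qed (rule integrable_0)
    then show ?thesis using False eq unfolding Gamma_def by simp
  qed
  have Gneg: "Gamma p v \<le> Gamma p (-v)" if fin: "p0_finite p" and v: "1 \<le> v" for v
  proof -
    let ?g = "\<lambda>a. p a - p 1"
    have ext: "\<forall>u\<le>0. p u = 2 * p 0 - p (- u)" using p_ext fin by blast
    have mo: "mono_on {-v..1} p" by (rule mono_onI) (auto intro: pmono[OF fin])
    have gi: "?g integrable_on {-v..1}"
      using mo by (intro integrable_diff integrable_const_ivl integrable_on_mono_on) auto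
    have comb: "integral {-v..-1} ?g + integral {-1..1} ?g = integral {-v..1} ?g"
      by (rule Henstock_Kurzweil_Integration.integral_combine) (use v gi in auto)
    have gi2: "?g integrable_on {-1..1}"
      by (rule integrable_on_subinterval[OF gi]) (use v in auto)
    have gi3: "?g integrable_on {-v..-1}"
      by (rule integrable_on_subinterval[OF gi]) (use v in auto)
    have i2: "integral {-1..1} ?g \<le> integral {-1..1} (\<lambda>a::real. 0)"
      by (rule Henstock_Kurzweil_Integration.integral_le[OF gi2]) (auto intro: pmono[OF fin] integrable_0)
    have mo1: "mono_on {1..v} p" by (rule mono_onI) (auto intro: pos_le)
    have ri0: "(\<lambda>b. p 1 - p b) integrable_on {1..v}"
      using mo1 by (intro integrable_diff integrable_const_ivl integrable_on_mono_on) auto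
    have ri: "(\<lambda>a. p 1 - p (-a)) integrable_on {-v..-1}"
      using Henstock_Kurzweil_Integration.integrable_reflect_real[where f="\<lambda>b. p 1 - p b" and a=1 and b=v] ri0 by simp
    have i3: "integral {-v..-1} ?g \<le> integral {-v..-1} (\<lambda>a. p 1 - p (-a))"
    proof (rule Henstock_Kurzweil_Integration.integral_le[OF gi3 ri])
      fix a assume "a \<in> {-v..-1}"
      then have "a \<le> 0" by simp
      then have "p a = 2 * p 0 - p (-a)" by (rule ext[rule_format])
      then show "?g a \<le> p 1 - p (- a)" using p01[OF fin] by simp
    qed
    have "integral {-v..-1} (\<lambda>a. p 1 - p (-a)) = integral {1..v} (\<lambda>b. p 1 - p b)"
      using Henstock_Kurzweil_Integration.integral_reflect_real[where f="\<lambda>b. p 1 - p b" and a=1 and b=v] by simp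
    also have "\<dots> = integral {1..v} (\<lambda>b. - (p b - p 1))" by (simp only: minus_diff_eq)
    also have "\<dots> = - integral {1..v} ?g" by (rule integral_neg)
    finally have "integral {-v..1} ?g \<le> - integral {1..v} ?g" using comb i2 i3 by simp
    then show ?thesis using v unfolding Gamma_def by simp
  qed
  show ?thesis
  proof (intro allI impI)
    fix \<epsilon> :: real assume e: "\<epsilon> > 0"
    have "eventually (\<lambda>u. Gamma p u / \<eta> u \<ge> 1 / \<epsilon>) at_top"
      using growth by (simp add: filterlim_at_top)
    then obtain M where M: "\<And>u. u \<ge> M \<Longrightarrow> Gamma p u / \<eta> u \<ge> 1 / \<epsilon>"
      by (auto simp: eventually_at_top_linorder)
    define M' where "M' = max M 1"
    have big: "\<eta> u \<le> \<epsilon> * Gamma p u" if "u \<ge> M'" for u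
    proof -
      have "u > 0" "u \<ge> M" using that by (auto simp: M'_def)
      then have pe: "\<eta> u > 0" and r: "Gamma p u / \<eta> u \<ge> 1 / \<epsilon>" using eta_pos M by auto
      then have "1 / \<epsilon> * \<eta> u \<le> Gamma p u" by (simp add: pos_le_divide_eq)
      then show ?thesis using e by (simp add: field_simps)
    qed
    have etaM: "0 \<le> \<eta> M'" using eta_mono eta0 by (metis M'_def atLeast_iff max.cobounded2 mono_onD order.trans zero_le_one order_refl)
    show "\<exists>C. \<forall>u\<in>Ip_bar p. \<eta> u \<le> \<epsilon> * Gamma p u + C"
    proof (intro exI ballI)
      fix u assume u: "u \<in> Ip_bar p"
      show "\<eta> u \<le> \<epsilon> * Gamma p u + \<eta> M'"
      proof (cases "u \<ge> M'")
        case True then show ?thesis using big etaM by force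
      next
        case False
        show ?thesis
        proof (cases "u \<le> - M'")
          case True
          then have "u < 0" by (auto simp: M'_def)
          then have fin: "p0_finite p" using u by (auto simp: Ip_bar_def split: if_splits)
          have "\<eta> u = \<eta> (-u)" using eta_even[of "-u"] by simp
          also have "\<dots> \<le> \<epsilon> * Gamma p (-u)" using big True by simp
          also have "\<dots> \<le> \<epsilon> * Gamma p u"
            using Gneg[OF fin, of "-u"] True e by (simp add: M'_def)
          finally show ?thesis using etaM by simp
        next
          case F2: False
          have "\<bar>u\<bar> \<le> M'" using False F2 by auto
          then have "\<eta> \<bar>u\<bar> \<le> \<eta> M'" using eta_mono by (auto intro: mono_onD)
          moreover have "\<eta> u = \<eta> \<bar>u\<bar>" using eta_even[of u] by (cases "u \<ge> 0") auto
          moreover have "0 \<le> \<epsilon> * Gamma p u" using Gnn[OF u] e by simp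
          ultimately show ?thesis by simp
        qed
      qed
    qed
  qed
qed

end
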